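(* Let $(M,g)$ be a $\mathcal{W}^{\star}$-flat space-time (i.e. $\mathcal{W}^{\star}_{ijkl}=0$) that is a dust fluid, i.e. it satisfies Einstein's field equation $R_{ij}-\frac12 R g_{ij}+\Lambda g_{ij}=kT_{ij}$ with $T_{ij}=\mu u_iu_j$. Then $M$ is a vacuum space-time: $T_{ij}=0$.
   Context: A space-time is a $4$-dimensional Lorentzian manifold $(M,g)$ with Levi-Civita connection $\nabla$. $R_{ijkl}$ denotes the components of the Riemann curvature tensor, with index conventions such that the Ricci tensor is $R_{jk}=g^{il}R_{ijkl}$; $R=g^{jk}R_{jk}$ is the scalar curvature. The $\mathcal{W}^{\star}$-curvature tensor is $\mathcal{W}^{\star}_{ijkl}=R_{ijkl}-\tfrac{1}{3}\left[g_{jk}R_{il}-g_{jl}R_{ik}\right]$. $\Lambda$ is a constant and $k\neq0$ a constant; $\mu$ is a smooth function (energy density) and $u$ is a unit timelike vector field with $u_i=g_{ij}u^j$, $u_iu^i=-1$. *)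

theory Defs
  imports "HOL-Analysis.Analysis" "HOL-Library.Numeral_Type"
begin

text \<open>Local coordinate description of a space-time: a chart domain U (open in R^4),
  metric components g x $ i $ j, indices of type 4.\<close>

definition pd :: "4 \<Rightarrow> (real^4 \<Rightarrow> real) \<Rightarrow> real^4 \<Rightarrow> real" where
  "pd k f x = deriv (\<lambda>t. f (x + t *\<^sub>R axis k 1)) 0"

fun iter_pd :: "4 list \<Rightarrow> (real^4 \<Rightarrow> real) \<Rightarrow> real^4 \<Rightarrow> real" where
  "iter_pd [] f = f"
| "iter_pd (k # ks) f = pd k (iter_pd ks f)"

definition smooth_on :: "(real^4) set \<Rightarrow> (real^4 \<Rightarrow> real) \<Rightarrow> bool" where
  "smooth_on U f \<longleftrightarrow> (\<forall>ks. iter_pd ks f differentiable_on U)"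

definition minkowski_eta :: "real^4^4" where
  "minkowski_eta = (\<chi> i j. if i = j then (if i = 0 then -1 else 1) else 0)"

definition lorentzian_metric_on :: "(real^4) set \<Rightarrow> (real^4 \<Rightarrow> real^4^4) \<Rightarrow> bool" where
  "lorentzian_metric_on U g \<longleftrightarrow>
     (\<forall>i j. smooth_on U (\<lambda>x. g x $ i $ j)) \<and>
     (\<forall>x\<in>U. transpose (g x) = g x \<and>
        (\<exists>P::real^4^4. invertible P \<and> transpose P ** g x ** P = minkowski_eta))"

definition ginv :: "(real^4 \<Rightarrow> real^4^4) \<Rightarrow> real^4 \<Rightarrow> real^4^4" where
  "ginv g x = matrix_inv (g x)"

definition christoffel :: "(real^4 \<Rightarrow> real^4^4) \<Rightarrow> real^4 \<Rightarrow> 4 \<Rightarrow> 4 \<Rightarrow> 4 \<Rightarrow> real" where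
  "christoffel g x i j k = (1/2) * (\<Sum>l\<in>UNIV. ginv g x $ i $ l *
      (pd j (\<lambda>y. g y $ l $ k) x + pd k (\<lambda>y. g y $ l $ j) x - pd l (\<lambda>y. g y $ j $ k) x))"

definition riemann_up :: "(real^4 \<Rightarrow> real^4^4) \<Rightarrow> real^4 \<Rightarrow> 4 \<Rightarrow> 4 \<Rightarrow> 4 \<Rightarrow> 4 \<Rightarrow> real" where
  "riemann_up g x a b c d =
     pd c (\<lambda>y. christoffel g y a d b) x - pd d (\<lambda>y. christoffel g y a c b) x
     + (\<Sum>e\<in>UNIV. christoffel g x a c e * christoffel g x e d b
                  - christoffel g x a d e * christoffel g x e c b)"

text \<open>Covariant components R_{ijkl}, arranged so that R_{jk} = g^{il} R_{ijkl}.\<close>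
definition riemann :: "(real^4 \<Rightarrow> real^4^4) \<Rightarrow> real^4 \<Rightarrow> 4 \<Rightarrow> 4 \<Rightarrow> 4 \<Rightarrow> 4 \<Rightarrow> real" where
  "riemann g x i j k l = (\<Sum>a\<in>UNIV. g x $ i $ a * riemann_up g x a j l k)"

definition ricci :: "(real^4 \<Rightarrow> real^4^4) \<Rightarrow> real^4 \<Rightarrow> 4 \<Rightarrow> 4 \<Rightarrow> real" where
  "ricci g x j k = (\<Sum>i\<in>UNIV. \<Sum>l\<in>UNIV. ginv g x $ i $ l * riemann g x i j k l)"

definition scalar_curv :: "(real^4 \<Rightarrow> real^4^4) \<Rightarrow> real^4 \<Rightarrow> real" where
  "scalar_curv g x = (\<Sum>j\<in>UNIV. \<Sum>k\<in>UNIV. ginv g x $ j $ k * ricci g x j k)"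

definition Wstar :: "(real^4 \<Rightarrow> real^4^4) \<Rightarrow> real^4 \<Rightarrow> 4 \<Rightarrow> 4 \<Rightarrow> 4 \<Rightarrow> 4 \<Rightarrow> real" where
  "Wstar g x i j k l = riemann g x i j k l
     - (1/3) * (g x $ j $ k * ricci g x i l - g x $ j $ l * ricci g x i k)"

definition lower :: "(real^4 \<Rightarrow> real^4^4) \<Rightarrow> (real^4 \<Rightarrow> real^4) \<Rightarrow> real^4 \<Rightarrow> 4 \<Rightarrow> real" where
  "lower g u x i = (\<Sum>j\<in>UNIV. g x $ i $ j * u x $ j)"

definition dust_T :: "(real^4 \<Rightarrow> real^4^4) \<Rightarrow> (real^4 \<Rightarrow> real) \<Rightarrow> (real^4 \<Rightarrow> real^4) \<Rightarrow> real^4 \<Rightarrow> 4 \<Rightarrow> 4 \<Rightarrow> real" where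
  "dust_T g mu u x i j = mu x * lower g u x i * lower g u x j"

end

theory Submission
  imports Defs
begin

lemma inv_props:
  fixes G :: "real^4^4"
  assumes "invertible G"
  shows "G ** matrix_inv G = mat 1 \<and> matrix_inv G ** G = mat 1"
  using assms unfolding invertible_def matrix_inv_def by (rule someI_ex)

lemma eta_inv: "invertible minkowski_eta"
proof -
  have "det minkowski_eta = (\<Prod>i\<in>UNIV. minkowski_eta $ i $ i)"
    by (rule det_diagonal) (simp add: minkowski_eta_def)
  also have "\<dots> \<noteq> 0"
    by (simp add: minkowski_eta_def)
  finally show ?thesis by (simp add: invertible_det_nz)
qed

lemma G_inv:
  fixes G P :: "real^4^4"
  assumes "transpose P ** G ** P = minkowski_eta"
  shows "invertible G"
proof -
  have "det (transpose P ** G ** P) \<noteq> 0" using assms eta_inv by (simp add: invertible_det_nz)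
  then show ?thesis by (simp add: det_mul invertible_det_nz)
qed

lemma quad_form:
  fixes A :: "real^4^4"
  shows "(\<Sum>i\<in>UNIV. \<Sum>j\<in>UNIV. A$i$j * v$i * w$j) = v \<bullet> (A *v w)"
  by (simp add: inner_vec_def matrix_vector_mult_def sum_distrib_left mult.assoc mult.left_commute)

lemma delta_sum:
  fixes H G :: "real^4^4"
  assumes "H ** transpose G = mat 1"
  shows "(\<Sum>l\<in>UNIV. H$i$l * G$j$l) = (if i = j then 1 else 0)"
proof -
  have "(H ** transpose G)$i$j = (\<Sum>l\<in>UNIV. H$i$l * G$j$l)"
    by (simp add: matrix_matrix_mult_def transpose_def)
  then show ?thesis using assms by (simp add: mat_def)
qed

lemma delta_sum2: "(\<Sum>a\<in>(UNIV::4 set). (if a = b then 1 else 0) * (f a::real)) = f b"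
proof -
  have "(\<Sum>a\<in>UNIV. (if a = b then 1 else 0) * f a) = (\<Sum>a\<in>(UNIV::4 set). if a = b then f a else 0)"
    by (rule sum.cong) auto
  then show ?thesis by simp
qed

theorem mainTheorem18:
  fixes U :: "(real^4) set" and g :: "real^4 \<Rightarrow> real^4^4"
    and u :: "real^4 \<Rightarrow> real^4" and mu :: "real^4 \<Rightarrow> real"
    and Lambda kappa :: real
  assumes "open U"
    and "lorentzian_metric_on U g"
    and "smooth_on U mu"
    and "\<forall>i. smooth_on U (\<lambda>x. u x $ i)"
    and "kappa \<noteq> 0"
    and "\<forall>x\<in>U. \<forall>i j k l. Wstar g x i j k l = 0"
    and "\<forall>x\<in>U. (\<Sum>i\<in>UNIV. lower g u x i * u x $ i) = -1"
    and "\<forall>x\<in>U. \<forall>i j. ricci g x i j - (1/2) * scalar_curv g x * g x $ i $ j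
                       + Lambda * g x $ i $ j = kappa * dust_T g mu u x i j"
  shows "\<forall>x\<in>U. \<forall>i j. dust_T g mu u x i j = 0"
proof (intro ballI allI)
  fix x i j assume xU: "x \<in> U"
  define G where "G = g x"
  define H where "H = ginv g x"
  define S where "S = scalar_curv g x"
  define ric where "ric = ricci g x"
  define ul where "ul = G *v u x"
  define v where "v = u x"
  have sym: "transpose G = G" and "\<exists>P::real^4^4. invertible P \<and> transpose P ** G ** P = minkowski_eta"
    using assms(2) xU unfolding lorentzian_metric_on_def G_def by auto
  then obtain P :: "real^4^4" where "transpose P ** G ** P = minkowski_eta" by auto
  then have inv: "G ** H = mat 1" "H ** G = mat 1"
    using inv_props[OF G_inv] unfolding H_def ginv_def G_def by auto
  have Gsym: "G$a$b = G$b$a" for a b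
  proof -
    have "transpose G $ a $ b = G $ b $ a" by (simp add: transpose_def)
    then show ?thesis using sym by simp
  qed
  have HGt: "H ** transpose G = mat 1" using inv sym by simp
  have ul_eq: "lower g u x a = ul$a" for a
    by (simp add: lower_def ul_def matrix_vector_mult_def G_def)
  have riem: "riemann g x a b c d = (1/3) * (G$b$c * ric a d - G$b$d * ric a c)" for a b c d
    using assms(6) xU unfolding Wstar_def G_def ric_def by (metis eq_iff_diff_eq_0)
  have S_eq: "S = (\<Sum>a\<in>UNIV. \<Sum>b\<in>UNIV. H$a$b * ric a b)"
    by (simp add: S_def scalar_curv_def H_def ric_def)
  have ric_eq: "ric b c = (S/4) * G$b$c" for b c
  proof -
    have "ric b c = (\<Sum>a\<in>UNIV. \<Sum>d\<in>UNIV. H$a$d * riemann g x a b c d)"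
      by (simp add: ric_def ricci_def H_def)
    also have "\<dots> = (\<Sum>a\<in>UNIV. \<Sum>d\<in>UNIV. H$a$d * ((1/3) * (G$b$c * ric a d - G$b$d * ric a c)))"
      by (simp only: riem)
    also have "\<dots> = (1/3) * (G$b$c * S) - (1/3) * (\<Sum>a\<in>UNIV. (\<Sum>d\<in>UNIV. H$a$d * G$b$d) * ric a c)"
      by (simp add: S_eq algebra_simps sum_distrib_left sum_distrib_right sum_subtractf)
    also have "\<dots> = (1/3) * (G$b$c * S) - (1/3) * ric b c"
      by (simp add: delta_sum[OF HGt] delta_sum2)
    finally show ?thesis by (simp add: algebra_simps)
  qed
  define c where "c = Lambda - S/4"
  have E: "c * G$a$b = kappa * mu x * ul$a * ul$b" for a b
  proof -
    have h0: "ric a b - (1/2) * S * G$a$b + Lambda * G$a$b = kappa * dust_T g mu u x a b"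
      using assms(8) xU unfolding G_def S_def ric_def by blast
    have h: "ric a b - (1/2) * S * G$a$b + Lambda * G$a$b = kappa * mu x * ul$a * ul$b"
      using h0 by (simp add: dust_T_def ul_eq mult.assoc)
    have "c * G$a$b = ric a b - (1/2) * S * G$a$b + Lambda * G$a$b"
      by (simp add: ric_eq c_def algebra_simps)
    then show ?thesis using h by simp
  qed
  have norm: "ul \<bullet> v = -1"
  proof -
    have "(\<Sum>i\<in>UNIV. lower g u x i * u x $ i) = -1" using assms(7) xU by blast
    then show ?thesis by (simp add: inner_vec_def ul_eq v_def)
  qed
  have e1: "(\<Sum>a\<in>UNIV. \<Sum>b\<in>UNIV. (c * G$a$b) * v$a * v$b) = - c"
  proof -
    have "(\<Sum>a\<in>UNIV. \<Sum>b\<in>UNIV. (c * G$a$b) * v$a * v$b) = c * (\<Sum>a\<in>UNIV. \<Sum>b\<in>UNIV. G$a$b * v$a * v$b)"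
      by (simp add: sum_distrib_left mult.assoc)
    also have "\<dots> = c * (v \<bullet> ul)" by (simp add: quad_form ul_def v_def)
    finally show ?thesis using norm by (simp add: inner_commute)
  qed
  have e2: "(\<Sum>a\<in>UNIV. \<Sum>b\<in>UNIV. (kappa * mu x * ul$a * ul$b) * v$a * v$b) = kappa * mu x"
  proof -
    have "(\<Sum>a\<in>UNIV. \<Sum>b\<in>UNIV. (kappa * mu x * ul$a * ul$b) * v$a * v$b)
        = kappa * mu x * ((\<Sum>a\<in>UNIV. ul$a * v$a) * (\<Sum>b\<in>UNIV. ul$b * v$b))"
      by (simp add: sum_distrib_left sum_distrib_right algebra_simps)
    then show ?thesis using norm by (simp add: inner_vec_def)
  qed
  have A: "- c = kappa * mu x" using e1 e2 E by simp
  have f1: "(\<Sum>a\<in>UNIV. \<Sum>b\<in>UNIV. H$a$b * (c * G$a$b)) = 4 * c"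
  proof -
    have "(\<Sum>a\<in>UNIV. \<Sum>b\<in>UNIV. H$a$b * (c * G$a$b)) = c * (\<Sum>a\<in>UNIV. \<Sum>b\<in>UNIV. H$a$b * G$a$b)"
      by (simp add: sum_distrib_left algebra_simps)
    also have "\<dots> = c * (\<Sum>a\<in>(UNIV::4 set). (1::real))"
      by (simp add: delta_sum[OF HGt])
    finally show ?thesis by simp
  qed
  have f2: "(\<Sum>a\<in>UNIV. \<Sum>b\<in>UNIV. H$a$b * (kappa * mu x * ul$a * ul$b)) = - kappa * mu x"
  proof -
    have "(\<Sum>a\<in>UNIV. \<Sum>b\<in>UNIV. H$a$b * (kappa * mu x * ul$a * ul$b))
       = kappa * mu x * (\<Sum>a\<in>UNIV. \<Sum>b\<in>UNIV. H$a$b * ul$a * ul$b)"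
      by (simp add: sum_distrib_left algebra_simps)
    also have "\<dots> = kappa * mu x * (ul \<bullet> (H *v ul))" by (simp add: quad_form)
    also have "H *v ul = v" using inv by (simp add: ul_def v_def matrix_vector_mul_assoc)
    finally show ?thesis using norm by simp
  qed
  have B: "4 * c = - kappa * mu x" using f1 f2 E by simp
  have "kappa * mu x = 0" using A B by linarith
  then have "mu x = 0" using assms(5) by simp
  then show "dust_T g mu u x i j = 0" by (simp add: dust_T_def)
qed

end
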